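(* Let $(H;\langle\cdot,\cdot\rangle)$ be an inner product space over $\mathbb{K}\in\{\mathbb{R},\mathbb{C}\}$, and let $\{e_i\}_{i\in I}$ and $\{f_j\}_{j\in J}$ be two finite orthonormal families of vectors in $H$. Then for any $x,y\in H\setminus\{0\}$, $$\left|\sum_{i\in I}\langle x,e_i\rangle\langle e_i,y\rangle+\sum_{j\in J}\langle x,f_j\rangle\langle f_j,y\rangle-2\sum_{i\in I,\,j\in J}\langle x,e_i\rangle\langle f_j,y\rangle\langle e_i,f_j\rangle-\frac12\langle x,y\rangle\right|\le\frac12\|x\|\,\|y\|.$$ Equality holds if and only if there exists $\lambda\in\mathbb{K}$ such that $$x-\lambda y=2\left(\sum_{i\in I}\langle x,e_i\rangle e_i-\lambda\sum_{j\in J}\langle y,f_j\rangle f_j\right).$$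
   Context: The inner product is linear in the first argument and conjugate-linear in the second; $\|x\|=\langle x,x\rangle^{1/2}$. A family $\{e_i\}_{i\in I}$ is orthonormal if $\langle e_i,e_j\rangle=1$ for $i=j$ and $0$ for $i\neq j$. *)

theory Defs
  imports "HOL-Analysis.Analysis"
begin

class complex_inner = ab_group_add +
  fixes scaleC :: "complex \<Rightarrow> 'a \<Rightarrow> 'a" (infixr "*\<^sub>C" 75)
    and cinner :: "'a \<Rightarrow> 'a \<Rightarrow> complex"
  assumes scaleC_add_right: "a *\<^sub>C (x + y) = a *\<^sub>C x + a *\<^sub>C y"
    and scaleC_add_left: "(a + b) *\<^sub>C x = a *\<^sub>C x + b *\<^sub>C x"
    and scaleC_scaleC: "a *\<^sub>C (b *\<^sub>C x) = (a * b) *\<^sub>C x"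
    and scaleC_one: "1 *\<^sub>C x = x"
    and cinner_add_left: "cinner (x + y) z = cinner x z + cinner y z"
    and cinner_scaleC_left: "cinner (a *\<^sub>C x) y = a * cinner x y"
    and cinner_commute: "cinner x y = cnj (cinner y x)"
    and cinner_nonneg: "0 \<le> Re (cinner x x)"
    and cinner_eq_zero_iff: "cinner x x = 0 \<longleftrightarrow> x = 0"

definition cnorm :: "'a::complex_inner \<Rightarrow> real" where
  "cnorm x = sqrt (Re (cinner x x))"

definition orthonormal_family :: "'i set \<Rightarrow> ('i \<Rightarrow> 'a::real_inner) \<Rightarrow> bool" where
  "orthonormal_family I e \<longleftrightarrow>
     (\<forall>i\<in>I. \<forall>j\<in>I. e i \<bullet> e j = (if i = j then 1 else 0))"

definition corthonormal_family :: "'i set \<Rightarrow> ('i \<Rightarrow> 'a::complex_inner) \<Rightarrow> bool" where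
  "corthonormal_family I e \<longleftrightarrow>
     (\<forall>i\<in>I. \<forall>j\<in>I. cinner (e i) (e j) = (if i = j then 1 else 0))"

end

theory Submission
  imports Defs
begin


lemma cinner_zero_left[simp]: "cinner 0 (y::'a::complex_inner) = 0"
  using cinner_add_left[of "0::'a" 0 y] by simp
lemma cinner_add_right: "cinner (x::'a::complex_inner) (y+z) = cinner x y + cinner x z"
  by (metis cinner_commute cinner_add_left complex_cnj_add)
lemma cinner_zero_right[simp]: "cinner (x::'a::complex_inner) 0 = 0"
  by (metis cinner_commute cinner_zero_left complex_cnj_zero)
lemma cinner_scaleC_right: "cinner (x::'a::complex_inner) (a *\<^sub>C y) = cnj a * cinner x y"
  by (metis cinner_commute cinner_scaleC_left complex_cnj_mult)
lemma cinner_minus_left: "cinner (- x::'a::complex_inner) y = - cinner x y"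
proof -
  have "cinner x y + cinner (- x) y = 0" using cinner_add_left[of x "-x" y] by simp
  from minus_unique[OF this] show ?thesis by simp
qed
lemma cinner_diff_left: "cinner (x - z::'a::complex_inner) y = cinner x y - cinner z y"
  unfolding diff_conv_add_uminus cinner_add_left cinner_minus_left by (rule refl)
lemma cinner_minus_right: "cinner (x::'a::complex_inner) (- y) = - cinner x y"
  by (metis cinner_commute cinner_minus_left complex_cnj_minus)
lemma cinner_diff_right: "cinner (x::'a::complex_inner) (y - z) = cinner x y - cinner x z"
  unfolding diff_conv_add_uminus cinner_add_right cinner_minus_right by (rule refl)
lemma cinner_sum_left: "cinner (sum g A::'a::complex_inner) y = (\<Sum>a\<in>A. cinner (g a) y)"
  by (induction A rule: infinite_finite_induct) (simp_all add: cinner_add_left)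
lemma cinner_sum_right: "cinner (y::'a::complex_inner) (sum g A) = (\<Sum>a\<in>A. cinner y (g a))"
  by (induction A rule: infinite_finite_induct) (simp_all add: cinner_add_right)
lemma scaleC_zero_left[simp]: "0 *\<^sub>C (x::'a::complex_inner) = 0"
  using scaleC_add_left[of 0 0 x] by simp
lemma scaleC_zero_right[simp]: "a *\<^sub>C (0::'a::complex_inner) = 0"
  using scaleC_add_right[of a "0::'a" 0] by simp
lemma scaleC_minus_right: "a *\<^sub>C (- x::'a::complex_inner) = - (a *\<^sub>C x)"
proof -
  have "a *\<^sub>C x + a *\<^sub>C (- x) = 0" using scaleC_add_right[of a x "-x"] by simp
  from minus_unique[OF this] show ?thesis by simp
qed
lemma scaleC_diff_right: "a *\<^sub>C (x - y::'a::complex_inner) = a *\<^sub>C x - a *\<^sub>C y"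
  unfolding diff_conv_add_uminus scaleC_add_right scaleC_minus_right by (rule refl)
lemma cinner_self_real: "cinner (x::'a::complex_inner) x = complex_of_real (Re (cinner x x))"
proof -
  have h: "Im (cinner x x) = Im (cnj (cinner x x))" by (rule arg_cong[where f=Im, OF cinner_commute[of x x]])
  then have "Im (cinner x x) = 0" by simp
  then show ?thesis by (simp add: complex_eq_iff)
qed
lemma cinner_pos: assumes "(x::'a::complex_inner) \<noteq> 0" shows "Re (cinner x x) > 0"
proof -
  have "cinner x x \<noteq> 0" using cinner_eq_zero_iff assms by blast
  then have "Re (cinner x x) \<noteq> 0" using cinner_self_real[of x] by (metis of_real_0)
  then show ?thesis using cinner_nonneg[of x] by linarith
qed

lemma g1: "\<And>A X B Y C D::complex. A - X*B - Y*(C - X*D) = A - Y*C - X*B + X*Y*D"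
    by algebra

lemma cinner_expand: "cinner (a - t *\<^sub>C b) (a - t *\<^sub>C (b::'a::complex_inner)) = cinner a a - cnj t * cinner a b - t * cinner b a + t * cnj t * cinner b b"
  unfolding cinner_diff_left cinner_diff_right cinner_scaleC_left cinner_scaleC_right
  by (rule g1)

lemma ccs_aux:
  fixes a b :: "'a::complex_inner"
  assumes "b \<noteq> 0"
  defines "r \<equiv> Re (cinner b b)"
  defines "t \<equiv> cinner a b / complex_of_real r"
  shows "Re (cinner (a - t *\<^sub>C b) (a - t *\<^sub>C b)) = Re (cinner a a) - (cmod (cinner a b))^2 / r"
proof -
  have r: "r > 0" using cinner_pos[OF assms(1)] r_def by simp
  have bb: "cinner b b = complex_of_real r" unfolding r_def by (rule cinner_self_real)
  have ba: "cinner b a = cnj (cinner a b)" by (rule cinner_commute)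
  have e1: "cinner (a - t *\<^sub>C b) (a - t *\<^sub>C b) = cinner a a - cnj t * cinner a b - t * cinner b a + t * cnj t * cinner b b"
    by (rule cinner_expand)
  have alg: "\<And>A c k R. (R::complex) \<noteq> 0 \<Longrightarrow> A - c/R*k - k/R*c + k/R*(c/R)*R = A - k*c/R"
    by (simp add: field_simps)
  have ct: "cnj t = cnj (cinner a b) / complex_of_real r" by (simp add: t_def)
  have e2: "cinner a a - cnj t * cinner a b - t * cinner b a + t * cnj t * cinner b b = cinner a a - cinner a b * cnj (cinner a b) / complex_of_real r"
    unfolding ct bb ba unfolding t_def by (rule alg) (use r in simp)
  have e3: "cinner a b * cnj (cinner a b) / complex_of_real r = complex_of_real ((cmod (cinner a b))^2 / r)"
    by (simp only: complex_norm_square[symmetric] of_real_divide)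
  show ?thesis by (simp only: e1 e2 e3 minus_complex.sel Re_complex_of_real)
qed

lemma ccs:
  fixes a b :: "'a::complex_inner"
  shows "cmod (cinner a b) \<le> cnorm a * cnorm b"
proof (cases "b = 0")
  case True then show ?thesis by (simp add: cnorm_def)
next
  case False
  define r where "r = Re (cinner b b)"
  have r: "r > 0" using cinner_pos[OF False] r_def by simp
  have "0 \<le> Re (cinner a a) - (cmod (cinner a b))^2 / r"
    using ccs_aux[OF False, of a, folded r_def] cinner_nonneg[of "a - (cinner a b / complex_of_real r) *\<^sub>C b"] by simp
  then have "(cmod (cinner a b))^2 \<le> Re (cinner a a) * r" using r by (simp add: field_simps)
  then have "sqrt ((cmod (cinner a b))^2) \<le> sqrt (Re (cinner a a) * r)" by (rule real_sqrt_le_mono)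
  then show ?thesis by (simp add: cnorm_def r_def real_sqrt_mult)
qed

lemma ccs_eq:
  fixes a b :: "'a::complex_inner"
  assumes "b \<noteq> 0"
  shows "cmod (cinner a b) = cnorm a * cnorm b \<longleftrightarrow> (\<exists>c. a = c *\<^sub>C b)"
proof
  define r where "r = Re (cinner b b)"
  have r: "r > 0" using cinner_pos[OF assms] r_def by simp
  define t where "t = cinner a b / complex_of_real r"
  assume h: "cmod (cinner a b) = cnorm a * cnorm b"
  then have "(cmod (cinner a b))^2 = (cnorm a)^2 * (cnorm b)^2" by (simp add: power_mult_distrib)
  also have "\<dots> = Re (cinner a a) * r" by (simp add: cnorm_def r_def cinner_nonneg)
  finally have "Re (cinner (a - t *\<^sub>C b) (a - t *\<^sub>C b)) = 0"
    using ccs_aux[OF assms] r unfolding r_def t_def by simp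
  then have "cinner (a - t *\<^sub>C b) (a - t *\<^sub>C b) = 0" by (subst cinner_self_real) simp
  then have "a = t *\<^sub>C b" using cinner_eq_zero_iff[of "a - t *\<^sub>C b"] by simp
  then show "\<exists>c. a = c *\<^sub>C b" by blast
next
  assume "\<exists>c. a = c *\<^sub>C b"
  then obtain c where c: "a = c *\<^sub>C b" by blast
  define r where "r = Re (cinner b b)"
  have r: "r \<ge> 0" using cinner_nonneg r_def by simp
  have bb: "cinner b b = complex_of_real r" unfolding r_def by (rule cinner_self_real)
  have 1: "cinner a b = c * complex_of_real r" using c bb by (simp add: cinner_scaleC_left)
  have cc: "c * cnj c = complex_of_real ((cmod c)^2)" by (rule complex_norm_square[symmetric])
  have "cinner a a = (c * cnj c) * cinner b b"
    unfolding c cinner_scaleC_left cinner_scaleC_right by (simp only: mult.assoc) (rule mult.left_commute)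
  then have 2: "cinner a a = complex_of_real ((cmod c)^2 * r)" unfolding cc bb by simp
  have "cnorm a * cnorm b = sqrt ((cmod c)^2 * r) * sqrt r" using 2 by (simp add: cnorm_def r_def)
  also have "\<dots> = cmod c * r" using r by (simp add: real_sqrt_mult)
  also have "\<dots> = cmod (cinner a b)" using 1 r by (simp add: norm_mult)
  finally show "cmod (cinner a b) = cnorm a * cnorm b" by simp
qed

lemma grp_eq: "((a::'a::ab_group_add) - b = c - d) = (b - d = a - c)"
  by (metis diff_diff_eq2 diff_eq_diff_eq eq_diff_eq' add.commute diff_add_cancel)

lemma scaleC_two: "(2::complex) *\<^sub>C (c *\<^sub>C (q::'a::complex_inner)) = c *\<^sub>C (2 *\<^sub>C q)"
  by (simp add: scaleC_scaleC mult.commute)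

lemma cproj_inner_e:
  fixes e :: "'i \<Rightarrow> 'b::complex_inner"
  assumes "finite I" "corthonormal_family I e" "k \<in> I"
  shows "cinner (\<Sum>i\<in>I. cinner x (e i) *\<^sub>C e i) (e k) = cinner x (e k)"
proof -
  have "cinner (\<Sum>i\<in>I. cinner x (e i) *\<^sub>C e i) (e k) = (\<Sum>i\<in>I. cinner x (e i) * cinner (e i) (e k))"
    by (simp add: cinner_sum_left cinner_scaleC_left)
  also have "\<dots> = (\<Sum>i\<in>I. if i = k then cinner x (e k) else 0)"
    using assms(2,3) unfolding corthonormal_family_def by (intro sum.cong) auto
  also have "\<dots> = cinner x (e k)" using assms(1,3) by simp
  finally show ?thesis .
qed

lemma cproj_self:
  fixes e :: "'i \<Rightarrow> 'b::complex_inner"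
  assumes "finite I" "corthonormal_family I e"
  shows "cinner (\<Sum>i\<in>I. cinner x (e i) *\<^sub>C e i) (\<Sum>i\<in>I. cinner x (e i) *\<^sub>C e i)
       = cinner (\<Sum>i\<in>I. cinner x (e i) *\<^sub>C e i) x"
proof -
  define p where "p = (\<Sum>i\<in>I. cinner x (e i) *\<^sub>C e i)"
  have "cinner p p = cinner p (\<Sum>k\<in>I. cinner x (e k) *\<^sub>C e k)" by (simp only: p_def)
  also have "\<dots> = (\<Sum>k\<in>I. cnj (cinner x (e k)) * cinner p (e k))"
    by (simp add: cinner_sum_right cinner_scaleC_right)
  also have "\<dots> = (\<Sum>k\<in>I. cnj (cinner x (e k)) * cinner x (e k))"
    unfolding p_def using cproj_inner_e[OF assms] by (intro sum.cong) auto
  also have "\<dots> = (\<Sum>k\<in>I. cinner x (e k) * cinner (e k) x)"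
    by (intro sum.cong refl) (metis cinner_commute mult.commute)
  also have "\<dots> = cinner p x" unfolding p_def by (simp add: cinner_sum_left cinner_scaleC_left)
  finally show ?thesis unfolding p_def .
qed

lemma crefl_norm:
  fixes p x :: "'b::complex_inner"
  assumes "cinner p p = cinner p x"
  shows "cinner (2 *\<^sub>C p - x) (2 *\<^sub>C p - x) = cinner x x"
proof -
  have xp: "cinner x p = cinner p p"
    by (metis assms cinner_commute)
  have "cinner (2 *\<^sub>C p - x) (2 *\<^sub>C p - x) = 2 * 2 * cinner p p - 2 * cinner p x - 2 * cinner x p + cinner x x"
    unfolding cinner_diff_left cinner_diff_right cinner_scaleC_left cinner_scaleC_right
    by (simp add: algebra_simps)
  then show ?thesis unfolding xp assms by simp
qed

lemma cinner_uv:
  fixes p q x y :: "'b::complex_inner"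
  shows "cinner (2 *\<^sub>C p - x) (2 *\<^sub>C q - y) = 4 * cinner p q - 2 * cinner p y - 2 * cinner x q + cinner x y"
  unfolding cinner_diff_left cinner_diff_right cinner_scaleC_left cinner_scaleC_right
  by (simp add: algebra_simps)


lemma complex_part:
  fixes e :: "'i \<Rightarrow> 'b::complex_inner" and f :: "'j \<Rightarrow> 'b"
  assumes I: "finite I" and J: "finite J" and oe: "corthonormal_family I e" and "corthonormal_family J f"
    and x0: "x \<noteq> 0" and y0: "y \<noteq> 0"
  defines "S \<equiv> (\<Sum>i\<in>I. cinner x (e i) * cinner (e i) y) + (\<Sum>j\<in>J. cinner x (f j) * cinner (f j) y)
               - 2 * (\<Sum>i\<in>I. \<Sum>j\<in>J. cinner x (e i) * cinner (f j) y * cinner (e i) (f j))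
               - (1/2) * cinner x y"
  shows "cmod S \<le> (1/2) * cnorm x * cnorm y \<and>
          (cmod S = (1/2) * cnorm x * cnorm y \<longleftrightarrow>
            (\<exists>c::complex. x - c *\<^sub>C y =
               2 *\<^sub>C ((\<Sum>i\<in>I. cinner x (e i) *\<^sub>C e i) - c *\<^sub>C (\<Sum>j\<in>J. cinner y (f j) *\<^sub>C f j))))"
proof -
  define p where "p = (\<Sum>i\<in>I. cinner x (e i) *\<^sub>C e i)"
  define q where "q = (\<Sum>j\<in>J. cinner y (f j) *\<^sub>C f j)"
  define u where "u = 2 *\<^sub>C p - x"
  define v where "v = 2 *\<^sub>C q - y"
  have uu: "cinner u u = cinner x x" unfolding u_def
    by (rule crefl_norm) (unfold p_def, rule cproj_self[OF I oe])
  have vv: "cinner v v = cinner y y" unfolding v_def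
    by (rule crefl_norm) (unfold q_def, rule cproj_self[OF J assms(4)])
  have nu: "cnorm u = cnorm x" using uu by (simp add: cnorm_def)
  have nv: "cnorm v = cnorm y" using vv by (simp add: cnorm_def)
  have v0: "v \<noteq> 0" using vv y0 cinner_eq_zero_iff by (metis cinner_zero_left)
  have py: "cinner p y = (\<Sum>i\<in>I. cinner x (e i) * cinner (e i) y)"
    unfolding p_def by (simp add: cinner_sum_left cinner_scaleC_left)
  have xq: "cinner x q = (\<Sum>j\<in>J. cinner x (f j) * cinner (f j) y)"
    unfolding q_def cinner_sum_right cinner_scaleC_right
    by (intro sum.cong refl) (metis cinner_commute mult.commute)
  have pq: "cinner p q = (\<Sum>i\<in>I. \<Sum>j\<in>J. cinner x (e i) * cinner (f j) y * cinner (e i) (f j))"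
    unfolding p_def q_def cinner_sum_left cinner_scaleC_left cinner_sum_right cinner_scaleC_right
      sum_distrib_left
    by (subst sum.swap) (intro sum.cong refl, metis cinner_commute mult.commute mult.left_commute)
  have S: "S = - (1/2) * cinner u v"
    unfolding S_def u_def v_def cinner_uv py xq pq by (simp add: algebra_simps)
  have cS: "cmod S = (1/2) * cmod (cinner u v)" unfolding S by (simp add: norm_mult)
  have ineq: "cmod S \<le> (1/2) * cnorm x * cnorm y"
    unfolding cS using ccs[of u v] nu nv by simp
  have "cmod S = (1/2) * cnorm x * cnorm y \<longleftrightarrow> cmod (cinner u v) = cnorm u * cnorm v"
    unfolding cS nu nv by simp
  also have "\<dots> \<longleftrightarrow> (\<exists>c. u = c *\<^sub>C v)" by (rule ccs_eq[OF v0])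
  also have "\<dots> \<longleftrightarrow> (\<exists>c::complex. x - c *\<^sub>C y = 2 *\<^sub>C (p - c *\<^sub>C q))"
  proof -
    have "u = c *\<^sub>C v \<longleftrightarrow> x - c *\<^sub>C y = 2 *\<^sub>C (p - c *\<^sub>C q)" for c
      unfolding u_def v_def scaleC_diff_right scaleC_two
      by (rule grp_eq)
    then show ?thesis by simp
  qed
  finally show ?thesis using ineq unfolding p_def q_def by simp
qed


lemma rcs_eq:
  fixes a b :: "'a::real_inner"
  assumes "b \<noteq> 0"
  shows "\<bar>a \<bullet> b\<bar> = norm a * norm b \<longleftrightarrow> (\<exists>c. a = c *\<^sub>R b)"
proof
  assume "\<bar>a \<bullet> b\<bar> = norm a * norm b"
  then have "norm a *\<^sub>R b = norm b *\<^sub>R a \<or> norm a *\<^sub>R b = - norm b *\<^sub>R a"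
    by (simp add: norm_cauchy_schwarz_abs_eq)
  then show "\<exists>c. a = c *\<^sub>R b"
  proof
    assume h: "norm a *\<^sub>R b = norm b *\<^sub>R a"
    have nb: "norm b \<noteq> 0" using assms by simp
    have "a = inverse (norm b) *\<^sub>R (norm b *\<^sub>R a)" using nb by simp
    also have "\<dots> = inverse (norm b) *\<^sub>R (norm a *\<^sub>R b)" using h by simp
    also have "\<dots> = (norm a / norm b) *\<^sub>R b" by (simp add: divide_inverse mult.commute)
    finally have "a = (norm a / norm b) *\<^sub>R b" .
    then show ?thesis by blast
  next
    assume h: "norm a *\<^sub>R b = - norm b *\<^sub>R a"
    have nb: "- norm b \<noteq> 0" using assms by simp
    have "a = inverse (- norm b) *\<^sub>R ((- norm b) *\<^sub>R a)" using nb by simp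
    also have "\<dots> = inverse (- norm b) *\<^sub>R (norm a *\<^sub>R b)" using h by simp
    also have "\<dots> = (- norm a / norm b) *\<^sub>R b" by (simp add: divide_inverse mult.commute)
    finally have "a = (- norm a / norm b) *\<^sub>R b" .
    then show ?thesis by blast
  qed
next
  assume "\<exists>c. a = c *\<^sub>R b"
  then obtain c where c: "a = c *\<^sub>R b" by blast
  show "\<bar>a \<bullet> b\<bar> = norm a * norm b"
    unfolding c by (simp add: abs_mult power2_norm_eq_inner[symmetric] power2_eq_square)
qed

lemma rproj_inner_e:
  fixes e :: "'i \<Rightarrow> 'b::real_inner"
  assumes "finite I" "orthonormal_family I e" "k \<in> I"
  shows "(\<Sum>i\<in>I. (x \<bullet> e i) *\<^sub>R e i) \<bullet> e k = x \<bullet> e k"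
proof -
  have "(\<Sum>i\<in>I. (x \<bullet> e i) *\<^sub>R e i) \<bullet> e k = (\<Sum>i\<in>I. (x \<bullet> e i) * (e i \<bullet> e k))"
    by (simp add: inner_sum_left)
  also have "\<dots> = (\<Sum>i\<in>I. if i = k then x \<bullet> e k else 0)"
    using assms(2,3) unfolding orthonormal_family_def by (intro sum.cong) auto
  also have "\<dots> = x \<bullet> e k" using assms(1,3) by simp
  finally show ?thesis .
qed

lemma rproj_self:
  fixes e :: "'i \<Rightarrow> 'b::real_inner"
  assumes "finite I" "orthonormal_family I e"
  shows "(\<Sum>i\<in>I. (x \<bullet> e i) *\<^sub>R e i) \<bullet> (\<Sum>i\<in>I. (x \<bullet> e i) *\<^sub>R e i)
       = (\<Sum>i\<in>I. (x \<bullet> e i) *\<^sub>R e i) \<bullet> x"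
proof -
  define p where "p = (\<Sum>i\<in>I. (x \<bullet> e i) *\<^sub>R e i)"
  have "p \<bullet> p = p \<bullet> (\<Sum>k\<in>I. (x \<bullet> e k) *\<^sub>R e k)" by (simp only: p_def)
  also have "\<dots> = (\<Sum>k\<in>I. (x \<bullet> e k) * (p \<bullet> e k))"
    by (simp add: inner_sum_right)
  also have "\<dots> = (\<Sum>k\<in>I. (x \<bullet> e k) * (x \<bullet> e k))"
    unfolding p_def using rproj_inner_e[OF assms] by (intro sum.cong) auto
  also have "\<dots> = (\<Sum>k\<in>I. (x \<bullet> e k) * (e k \<bullet> x))"
    by (intro sum.cong refl) (metis inner_commute)
  also have "\<dots> = p \<bullet> x" unfolding p_def by (simp add: inner_sum_left)
  finally show ?thesis unfolding p_def .
qed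

lemma rrefl_norm:
  fixes p x :: "'b::real_inner"
  assumes "p \<bullet> p = p \<bullet> x"
  shows "norm (2 *\<^sub>R p - x) = norm x"
proof -
  have "(2 *\<^sub>R p - x) \<bullet> (2 *\<^sub>R p - x) = 4 * (p \<bullet> p) - 4 * (p \<bullet> x) + x \<bullet> x"
    by (simp add: algebra_simps inner_commute)
  then have "(2 *\<^sub>R p - x) \<bullet> (2 *\<^sub>R p - x) = x \<bullet> x" using assms by simp
  then show ?thesis by (simp add: norm_eq_sqrt_inner)
qed

lemma real_part:
  fixes e :: "'i \<Rightarrow> 'a::real_inner" and f :: "'j \<Rightarrow> 'a"
  assumes I: "finite I" and J: "finite J" and oe: "orthonormal_family I e" and "orthonormal_family J f"
    and x0: "x \<noteq> 0" and y0: "y \<noteq> 0"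
  defines "S \<equiv> (\<Sum>i\<in>I. (x \<bullet> e i) * (e i \<bullet> y)) + (\<Sum>j\<in>J. (x \<bullet> f j) * (f j \<bullet> y))
               - 2 * (\<Sum>i\<in>I. \<Sum>j\<in>J. (x \<bullet> e i) * (f j \<bullet> y) * (e i \<bullet> f j))
               - (1/2) * (x \<bullet> y)"
  shows "\<bar>S\<bar> \<le> (1/2) * norm x * norm y \<and>
          (\<bar>S\<bar> = (1/2) * norm x * norm y \<longleftrightarrow>
            (\<exists>c::real. x - c *\<^sub>R y =
               2 *\<^sub>R ((\<Sum>i\<in>I. (x \<bullet> e i) *\<^sub>R e i) - c *\<^sub>R (\<Sum>j\<in>J. (y \<bullet> f j) *\<^sub>R f j))))"
proof -
  define p where "p = (\<Sum>i\<in>I. (x \<bullet> e i) *\<^sub>R e i)"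
  define q where "q = (\<Sum>j\<in>J. (y \<bullet> f j) *\<^sub>R f j)"
  define u where "u = 2 *\<^sub>R p - x"
  define v where "v = 2 *\<^sub>R q - y"
  have nu: "norm u = norm x" unfolding u_def
    by (rule rrefl_norm) (unfold p_def, rule rproj_self[OF I oe])
  have nv: "norm v = norm y" unfolding v_def
    by (rule rrefl_norm) (unfold q_def, rule rproj_self[OF J assms(4)])
  have v0: "v \<noteq> 0" using nv y0 by auto
  have py: "p \<bullet> y = (\<Sum>i\<in>I. (x \<bullet> e i) * (e i \<bullet> y))"
    unfolding p_def by (simp add: inner_sum_left)
  have xq: "x \<bullet> q = (\<Sum>j\<in>J. (x \<bullet> f j) * (f j \<bullet> y))"
    unfolding q_def by (simp add: inner_sum_right inner_commute mult.commute)
  have pq: "p \<bullet> q = (\<Sum>i\<in>I. \<Sum>j\<in>J. (x \<bullet> e i) * (f j \<bullet> y) * (e i \<bullet> f j))"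
    unfolding p_def q_def inner_sum_left inner_sum_right inner_scaleR_left inner_scaleR_right
      sum_distrib_left
    by (subst sum.swap) (intro sum.cong refl, metis inner_commute mult.commute mult.left_commute)
  have uv: "u \<bullet> v = 4 * (p \<bullet> q) - 2 * (p \<bullet> y) - 2 * (x \<bullet> q) + x \<bullet> y"
    unfolding u_def v_def by (simp add: algebra_simps)
  have S: "S = - (1/2) * (u \<bullet> v)"
    unfolding S_def uv py xq pq by (simp add: algebra_simps)
  have cS: "\<bar>S\<bar> = (1/2) * \<bar>u \<bullet> v\<bar>" unfolding S by (simp add: abs_mult)
  have ineq: "\<bar>S\<bar> \<le> (1/2) * norm x * norm y"
    unfolding cS using Cauchy_Schwarz_ineq2[of u v] nu nv by simp
  have "\<bar>S\<bar> = (1/2) * norm x * norm y \<longleftrightarrow> \<bar>u \<bullet> v\<bar> = norm u * norm v"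
    unfolding cS nu nv by simp
  also have "\<dots> \<longleftrightarrow> (\<exists>c. u = c *\<^sub>R v)" by (rule rcs_eq[OF v0])
  also have "\<dots> \<longleftrightarrow> (\<exists>c::real. x - c *\<^sub>R y = 2 *\<^sub>R (p - c *\<^sub>R q))"
  proof -
    have "u = c *\<^sub>R v \<longleftrightarrow> x - c *\<^sub>R y = 2 *\<^sub>R (p - c *\<^sub>R q)" for c
      unfolding u_def v_def scaleR_diff_right scaleR_scaleR mult.commute[of 2 c]
      by (rule grp_eq)
    then show ?thesis by simp
  qed
  finally show ?thesis using ineq unfolding p_def q_def by simp
qed


theorem theorem2p1:
  shows
  "(\<forall>(I :: 'i set) (J :: 'j set) (e :: 'i \<Rightarrow> 'a::real_inner) (f :: 'j \<Rightarrow> 'a) x y.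
      finite I \<longrightarrow> finite J \<longrightarrow> orthonormal_family I e \<longrightarrow> orthonormal_family J f \<longrightarrow>
      x \<noteq> 0 \<longrightarrow> y \<noteq> 0 \<longrightarrow>
      (let S = (\<Sum>i\<in>I. (x \<bullet> e i) * (e i \<bullet> y)) + (\<Sum>j\<in>J. (x \<bullet> f j) * (f j \<bullet> y))
               - 2 * (\<Sum>i\<in>I. \<Sum>j\<in>J. (x \<bullet> e i) * (f j \<bullet> y) * (e i \<bullet> f j))
               - (1/2) * (x \<bullet> y)
       in \<bar>S\<bar> \<le> (1/2) * norm x * norm y \<and>
          (\<bar>S\<bar> = (1/2) * norm x * norm y \<longleftrightarrow>
            (\<exists>c::real. x - c *\<^sub>R y =
               2 *\<^sub>R ((\<Sum>i\<in>I. (x \<bullet> e i) *\<^sub>R e i) - c *\<^sub>R (\<Sum>j\<in>J. (y \<bullet> f j) *\<^sub>R f j))))))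
   \<and>
   (\<forall>(I :: 'i set) (J :: 'j set) (e :: 'i \<Rightarrow> 'b::complex_inner) (f :: 'j \<Rightarrow> 'b) x y.
      finite I \<longrightarrow> finite J \<longrightarrow> corthonormal_family I e \<longrightarrow> corthonormal_family J f \<longrightarrow>
      x \<noteq> 0 \<longrightarrow> y \<noteq> 0 \<longrightarrow>
      (let S = (\<Sum>i\<in>I. cinner x (e i) * cinner (e i) y) + (\<Sum>j\<in>J. cinner x (f j) * cinner (f j) y)
               - 2 * (\<Sum>i\<in>I. \<Sum>j\<in>J. cinner x (e i) * cinner (f j) y * cinner (e i) (f j))
               - (1/2) * cinner x y
       in cmod S \<le> (1/2) * cnorm x * cnorm y \<and>
          (cmod S = (1/2) * cnorm x * cnorm y \<longleftrightarrow>
            (\<exists>c::complex. x - c *\<^sub>C y =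
               2 *\<^sub>C ((\<Sum>i\<in>I. cinner x (e i) *\<^sub>C e i) - c *\<^sub>C (\<Sum>j\<in>J. cinner y (f j) *\<^sub>C f j))))))"
  proof (intro conjI allI impI)
  fix I :: "'i set" and J :: "'j set" and e :: "'i \<Rightarrow> 'a::real_inner" and f :: "'j \<Rightarrow> 'a" and x y :: 'a
  assume "finite I" "finite J" "orthonormal_family I e" "orthonormal_family J f" "x \<noteq> 0" "y \<noteq> 0"
  then show "let S = (\<Sum>i\<in>I. (x \<bullet> e i) * (e i \<bullet> y)) + (\<Sum>j\<in>J. (x \<bullet> f j) * (f j \<bullet> y))
               - 2 * (\<Sum>i\<in>I. \<Sum>j\<in>J. (x \<bullet> e i) * (f j \<bullet> y) * (e i \<bullet> f j))
               - (1/2) * (x \<bullet> y)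
       in \<bar>S\<bar> \<le> (1/2) * norm x * norm y \<and>
          (\<bar>S\<bar> = (1/2) * norm x * norm y \<longleftrightarrow>
            (\<exists>c::real. x - c *\<^sub>R y =
               2 *\<^sub>R ((\<Sum>i\<in>I. (x \<bullet> e i) *\<^sub>R e i) - c *\<^sub>R (\<Sum>j\<in>J. (y \<bullet> f j) *\<^sub>R f j))))"
    unfolding Let_def by (rule real_part)
next
  fix I :: "'i set" and J :: "'j set" and e :: "'i \<Rightarrow> 'b::complex_inner" and f :: "'j \<Rightarrow> 'b" and x y :: 'b
  assume "finite I" "finite J" "corthonormal_family I e" "corthonormal_family J f" "x \<noteq> 0" "y \<noteq> 0"
  then show "let S = (\<Sum>i\<in>I. cinner x (e i) * cinner (e i) y) + (\<Sum>j\<in>J. cinner x (f j) * cinner (f j) y)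
               - 2 * (\<Sum>i\<in>I. \<Sum>j\<in>J. cinner x (e i) * cinner (f j) y * cinner (e i) (f j))
               - (1/2) * cinner x y
       in cmod S \<le> (1/2) * cnorm x * cnorm y \<and>
          (cmod S = (1/2) * cnorm x * cnorm y \<longleftrightarrow>
            (\<exists>c::complex. x - c *\<^sub>C y =
               2 *\<^sub>C ((\<Sum>i\<in>I. cinner x (e i) *\<^sub>C e i) - c *\<^sub>C (\<Sum>j\<in>J. cinner y (f j) *\<^sub>C f j))))"
    unfolding Let_def by (rule complex_part)
qed

end
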